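(* In the contention game with $k=3$ channels under acknowledgement-based feedback and $n\in\{2,3,4,5\}$ players, the anonymous protocol $f^3$ (in every slot, regardless of history, a pending player transmits on each of the three channels with probability $1/3$ and never stays idle) is an equilibrium protocol, with expected latency of each player equal to $3/2$, $15/8$, $189/80$ and $597/200$ for $n=2,3,4,5$ respectively.
   Context: Contention game: $n$ players, channel set $K=\{1,\dots,k\}$, discrete slots $t=1,2,\dots$; each player has one packet and is initially pending. In each slot a pending player chooses (possibly at random) an action in $\{0,1,\dots,k\}$ ($0$ = no transmission, $a$ = transmit on channel $a$). A lone transmitter on a channel succeeds and leaves; two or more transmitters on a channel collide and remain pending. Latency $T_i$ = slot of player $i$'s successful transmission; players minimize expected latency. Acknowledgement-based feedback: only a player who attempted transmission learns whether she succeeded; decision rules depend only on the personal action history. A protocol is a sequence of such decision rules; an anonymous protocol is used by all players and does not depend on identity. It is an equilibrium protocol if, when all players use it, no player at any slot and after any history can decrease her conditional expected latency by unilaterally deviating. *)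

theory Defs
  imports "HOL-Probability.Probability"
begin

(* Players are 0..n-1, channels are 1..k, action 0 = stay idle.
   A pending player's personal history is the list of her past actions
   (every transmission in it failed, idle slots give no information). *)

type_synonym hist = "nat list"
type_synonym state = "nat \<Rightarrow> hist option"   (* None = departed (or not a player) *)
type_synonym rule = "hist \<Rightarrow> nat pmf"

definition valid_rule :: "nat \<Rightarrow> rule \<Rightarrow> bool" where
  "valid_rule k r \<longleftrightarrow> (\<forall>h. set_pmf (r h) \<subseteq> {0..k})"

definition actions :: "nat \<Rightarrow> (nat \<Rightarrow> rule) \<Rightarrow> state \<Rightarrow> (nat \<Rightarrow> nat) pmf" where
  "actions n \<sigma> s = Pi_pmf {..<n} 0
     (\<lambda>j. case s j of None \<Rightarrow> return_pmf 0 | Some h \<Rightarrow> \<sigma> j h)"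

definition outcome :: "nat \<Rightarrow> state \<Rightarrow> (nat \<Rightarrow> nat) \<Rightarrow> state" where
  "outcome n s a = (\<lambda>j. case s j of None \<Rightarrow> None | Some h \<Rightarrow>
     (if a j \<noteq> 0 \<and> (\<forall>j'<n. j' \<noteq> j \<longrightarrow> s j' = None \<or> a j' \<noteq> a j)
      then None else Some (h @ [a j])))"

definition step :: "nat \<Rightarrow> (nat \<Rightarrow> rule) \<Rightarrow> state \<Rightarrow> state pmf" where
  "step n \<sigma> s = map_pmf (outcome n s) (actions n \<sigma> s)"

definition run :: "nat \<Rightarrow> (nat \<Rightarrow> rule) \<Rightarrow> nat \<Rightarrow> state pmf \<Rightarrow> state pmf" where
  "run n \<sigma> m p = ((\<lambda>q. bind_pmf q (step n \<sigma>)) ^^ m) p"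

definition init :: "nat \<Rightarrow> state" where
  "init n = (\<lambda>j. if j < n then Some [] else None)"

(* expected number of further slots until player i succeeds:
   sum over m >= 0 of P(player i still pending after m further slots) *)
definition exp_remaining :: "nat \<Rightarrow> (nat \<Rightarrow> rule) \<Rightarrow> nat \<Rightarrow> state pmf \<Rightarrow> ennreal" where
  "exp_remaining n \<sigma> i p =
     (\<Sum>m. ennreal (measure_pmf.prob (run n \<sigma> m p) {s. s i \<noteq> None}))"

definition expected_latency :: "nat \<Rightarrow> rule \<Rightarrow> nat \<Rightarrow> ennreal" where
  "expected_latency n f i = exp_remaining n (\<lambda>_. f) i (return_pmf (init n))"

definition follow :: "hist \<Rightarrow> rule" where
  "follow h = (\<lambda>hh. return_pmf (if length hh < length h then h ! length hh else 0))"

(* joint distribution of the state at the start of slot (length h + 1) *)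
definition prior :: "nat \<Rightarrow> rule \<Rightarrow> nat \<Rightarrow> hist \<Rightarrow> state pmf" where
  "prior n f i h = run n ((\<lambda>_. f)(i := follow h)) (length h) (return_pmf (init n))"

definition hist_event :: "nat \<Rightarrow> hist \<Rightarrow> state set" where
  "hist_event i h = {s. s i = Some h}"

definition possible_hist :: "nat \<Rightarrow> rule \<Rightarrow> nat \<Rightarrow> hist \<Rightarrow> bool" where
  "possible_hist n f i h \<longleftrightarrow> measure_pmf.prob (prior n f i h) (hist_event i h) > 0"

definition cond_latency :: "nat \<Rightarrow> rule \<Rightarrow> rule \<Rightarrow> nat \<Rightarrow> hist \<Rightarrow> ennreal" where
  "cond_latency n f g i h =
     of_nat (length h) +
     exp_remaining n ((\<lambda>_. f)(i := g)) i (cond_pmf (prior n f i h) (hist_event i h))"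

definition equilibrium_protocol :: "nat \<Rightarrow> nat \<Rightarrow> rule \<Rightarrow> bool" where
  "equilibrium_protocol n k f \<longleftrightarrow> valid_rule k f \<and>
     (\<forall>i<n. \<forall>h. set h \<subseteq> {0..k} \<longrightarrow> possible_hist n f i h \<longrightarrow>
        (\<forall>g. valid_rule k g \<longrightarrow> cond_latency n f f i h \<le> cond_latency n f g i h))"

definition f3 :: rule where
  "f3 = (\<lambda>_. pmf_of_set {1, 2, 3})"

end

theory Submission
  imports Defs
begin

fun addv :: "nat \<Rightarrow> nat \<times> nat \<times> nat \<Rightarrow> nat \<times> nat \<times> nat" where
  "addv y (a,b,c) = (if y = 1 then (Suc a,b,c) else if y = 2 then (a,Suc b,c)
     else if y = 3 then (a,b,Suc c) else (a,b,c))"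
fun Ek :: "nat \<Rightarrow> (nat \<times> nat \<times> nat \<Rightarrow> real) \<Rightarrow> real" where
  "Ek 0 F = F (0,0,0)"
| "Ek (Suc k) F = (Ek k (\<lambda>v. F (addv 1 v)) + Ek k (\<lambda>v. F (addv 2 v)) + Ek k (\<lambda>v. F (addv 3 v))) / 3"

definition cnt1 :: "nat set \<Rightarrow> (nat \<Rightarrow> nat) \<Rightarrow> nat \<Rightarrow> nat" where
  "cnt1 A f c = card {j\<in>A. f j = c}"
definition cntv :: "nat set \<Rightarrow> (nat \<Rightarrow> nat) \<Rightarrow> nat \<times> nat \<times> nat" where
  "cntv A f = (cnt1 A f 1, cnt1 A f 2, cnt1 A f 3)"

lemma Ek_nonneg: "(\<And>v. F v \<ge> 0) \<Longrightarrow> Ek k F \<ge> 0"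
  by (induction k arbitrary: F) auto

lemma cnt1_insert: "finite A \<Longrightarrow> x \<notin> A \<Longrightarrow>
  cnt1 (insert x A) (f(x:=y)) c = cnt1 A f c + (if y = c then 1 else 0)"
proof -
  assume A: "finite A" "x \<notin> A"
  have "{j\<in>insert x A. (f(x:=y)) j = c} = (if y = c then insert x {j\<in>A. f j = c} else {j\<in>A. f j = c})"
    using A by auto
  then show ?thesis using A by (simp add: cnt1_def)
qed

lemma cntv_insert: "finite A \<Longrightarrow> x \<notin> A \<Longrightarrow> cntv (insert x A) (f(x:=y)) = addv y (cntv A f)"
  by (simp add: cntv_def cnt1_insert)

lemma Pi_Ek:
  assumes "finite A" "\<forall>j\<in>A. Q j = (if P j then pmf_of_set {1,2,3} else return_pmf 0)"
    "\<And>v. F v \<ge> 0"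
  shows "(\<integral>\<^sup>+f. ennreal (F (cntv A f)) \<partial>Pi_pmf A 0 Q) = ennreal (Ek (card {j\<in>A. P j}) F)"
  using assms
proof (induction A arbitrary: F rule: finite_induct)
  case empty
  then show ?case by (simp add: cntv_def cnt1_def)
next
  case (insert x A)
  have IH: "\<And>y. (\<integral>\<^sup>+f. ennreal (F (addv y (cntv A f))) \<partial>Pi_pmf A 0 Q) = ennreal (Ek (card {j\<in>A. P j}) (\<lambda>v. F (addv y v)))"
    using insert by (intro insert.IH) auto
  have "(\<integral>\<^sup>+f. ennreal (F (cntv (insert x A) f)) \<partial>Pi_pmf (insert x A) 0 Q)
     = (\<integral>\<^sup>+y. \<integral>\<^sup>+f. ennreal (F (cntv (insert x A) (f(x:=y)))) \<partial>Pi_pmf A 0 Q \<partial>Q x)"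
    using insert by (subst Pi_pmf_insert) (simp_all add: nn_integral_pair_pmf' case_prod_beta)
  also have "\<dots> = (\<integral>\<^sup>+y. ennreal (Ek (card {j\<in>A. P j}) (\<lambda>v. F (addv y v))) \<partial>Q x)"
    using insert by (simp add: cntv_insert IH)
  also have "\<dots> = ennreal (Ek (card {j\<in>insert x A. P j}) F)"
  proof (cases "P x")
    case True
    have c: "card {j\<in>insert x A. P j} = Suc (card {j\<in>A. P j})"
    proof -
      have "{j\<in>insert x A. P j} = insert x {j\<in>A. P j}" using True by auto
      then show ?thesis using insert by simp
    qed
    have nn: "\<And>y. 0 \<le> Ek (card {j\<in>A. P j}) (\<lambda>v. F (addv y v))"
      using insert by (intro Ek_nonneg) auto
    define E where "E y = Ek (card {j\<in>A. P j}) (\<lambda>v. F (addv y v))" for y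
    have "(\<integral>\<^sup>+y. ennreal (E y) \<partial>Q x) = (\<Sum>y\<in>{1,2,3::nat}. ennreal (E y)) / 3"
      using insert True by (simp add: nn_integral_pmf_of_set)
    also have "(\<Sum>y\<in>{1,2,3::nat}. ennreal (E y)) = ennreal (\<Sum>y\<in>{1,2,3::nat}. E y)"
      by (rule sum_ennreal) (use nn in \<open>simp add: E_def\<close>)
    also have "ennreal (\<Sum>y\<in>{1,2,3::nat}. E y) / 3 = ennreal ((\<Sum>y\<in>{1,2,3::nat}. E y) / 3)"
    proof -
      have "ennreal (\<Sum>y\<in>{1,2,3::nat}. E y) / ennreal 3 = ennreal ((\<Sum>y\<in>{1,2,3::nat}. E y) / 3)"
        by (rule divide_ennreal) (use nn in \<open>auto simp: E_def intro!: sum_nonneg\<close>)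
      then show ?thesis by simp
    qed
    also have "(\<Sum>y\<in>{1,2,3::nat}. E y) / 3 = Ek (card {j\<in>insert x A. P j}) F"
      using c by (simp add: E_def add.assoc)
    finally show ?thesis by (simp add: E_def)
  next
    case False
    have c: "card {j\<in>insert x A. P j} = card {j\<in>A. P j}"
    proof -
      have "{j\<in>insert x A. P j} = {j\<in>A. P j}" using False by auto
      then show ?thesis by simp
    qed
    have "\<And>v. addv 0 v = v" by (case_tac v) auto
    then show ?thesis using insert False c Ek_nonneg by simp
  qed
  finally show ?case .
qed
fun sel :: "nat \<Rightarrow> nat \<times> nat \<times> nat \<Rightarrow> nat" where
  "sel y (a,b,c) = (if y = 1 then a else if y = 2 then b else c)"
fun remv :: "nat \<Rightarrow> nat \<times> nat \<times> nat \<Rightarrow> nat" where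
  "remv y (a,b,c) = (if 2 \<le> a + (if y = 1 then 1 else 0) then a else 0) +
     (if 2 \<le> b + (if y = 2 then 1 else 0) then b else 0) +
     (if 2 \<le> c + (if y = 3 then 1 else 0) then c else 0)"
definition Vv :: "nat \<Rightarrow> real" where
  "Vv m = (if m = 0 then 1 else if m = 1 then 3/2 else if m = 2 then 15/8
     else if m = 3 then 189/80 else if m = 4 then 597/200 else 0)"
definition Gv :: "nat \<Rightarrow> nat \<times> nat \<times> nat \<Rightarrow> real" where
  "Gv y v = (if y \<noteq> 0 \<and> sel y v = 0 then 0 else Vv (remv y v))"
definition Phi :: "nat \<Rightarrow> nat \<Rightarrow> state \<Rightarrow> real" where
  "Phi n i s = (if s i = None then 0 else Vv (card {j. j < n \<and> j \<noteq> i \<and> s j \<noteq> None}))"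

lemma Ek_vals: "m \<le> 4 \<Longrightarrow> y \<in> {1,2,3} \<Longrightarrow> Ek m (Gv y) = Vv m - 1"
  apply (simp add: numeral_eq_Suc le_Suc_eq)
  apply (elim disjE; simp add: Gv_def Vv_def)
  done
lemma Ek_idle: "m \<le> 4 \<Longrightarrow> Ek m (Gv 0) \<ge> Vv m - 1"
  apply (simp add: numeral_eq_Suc le_Suc_eq)
  apply (elim disjE; simp add: Gv_def Vv_def)
  done


lemma two_le_card_iff: "finite S \<Longrightarrow> j \<in> S \<Longrightarrow> (\<exists>j'\<in>S. j' \<noteq> j) \<longleftrightarrow> 2 \<le> card S"
proof -
  assume S: "finite S" "j \<in> S"
  have "card S \<le> Suc 0 \<longleftrightarrow> (\<forall>a\<in>S. \<forall>b\<in>S. a = b)" using card_le_Suc0_iff_eq S by blast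
  then show ?thesis using S by (metis not_less_eq_eq numeral_2_eq_2)
qed

lemma outcome_i:
  assumes "i < n" "s i = Some h" "y \<le> 3" "A = {..<n} - {i}"
    "\<forall>j\<in>A. s j = None \<longrightarrow> f j = 0" "\<forall>j\<in>A. s j \<noteq> None \<longrightarrow> f j \<in> {1,2,3}"
  shows "outcome n s (f(i:=y)) i = None \<longleftrightarrow> (y \<noteq> 0 \<and> sel y (cntv A f) = 0)"
proof -
  have fin: "finite A" using assms by simp
  have "outcome n s (f(i:=y)) i = None \<longleftrightarrow> y \<noteq> 0 \<and> (\<forall>j'<n. j' \<noteq> i \<longrightarrow> s j' = None \<or> f j' \<noteq> y)"
    using assms by (simp add: outcome_def)
  also have "\<dots> \<longleftrightarrow> y \<noteq> 0 \<and> (\<forall>j'\<in>A. f j' \<noteq> y)"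
    using assms by auto
  also have "\<dots> \<longleftrightarrow> y \<noteq> 0 \<and> cnt1 A f y = 0"
    using fin by (auto simp: cnt1_def)
  also have "\<dots> \<longleftrightarrow> y \<noteq> 0 \<and> sel y (cntv A f) = 0"
    using assms(3) by (auto simp: cntv_def le_Suc_eq numeral_eq_Suc)
  finally show ?thesis .
qed

lemma outcome_others:
  assumes "i < n" "s i = Some h" "y \<le> 3" "A = {..<n} - {i}"
    "\<forall>j\<in>A. s j = None \<longrightarrow> f j = 0" "\<forall>j\<in>A. s j \<noteq> None \<longrightarrow> f j \<in> {1,2,3}"
  shows "{j. j < n \<and> j \<noteq> i \<and> outcome n s (f(i:=y)) j \<noteq> None} =
     {j\<in>A. f j \<noteq> 0 \<and> (f j = y \<or> 2 \<le> cnt1 A f (f j))}"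
proof -
  have fin: "finite A" using assms by simp
  have key: "outcome n s (f(i:=y)) j \<noteq> None \<longleftrightarrow> (f j = y \<or> 2 \<le> cnt1 A f (f j))"
    if j: "j \<in> A" "f j \<noteq> 0" for j
  proof -
    have sj: "s j \<noteq> None" using j assms by auto
    have ji: "j \<noteq> i" "j < n" using j assms by auto
    have "outcome n s (f(i:=y)) j \<noteq> None \<longleftrightarrow>
        (\<exists>j'<n. j' \<noteq> j \<and> s j' \<noteq> None \<and> (f(i:=y)) j' = f j)"
      using sj ji j by (auto simp: outcome_def split: option.splits)
    also have "\<dots> \<longleftrightarrow> (f j = y \<or> (\<exists>j'\<in>{k\<in>A. f k = f j}. j' \<noteq> j))"
    proof
      assume "\<exists>j'<n. j' \<noteq> j \<and> s j' \<noteq> None \<and> (f(i:=y)) j' = f j"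
      then obtain j' where "j' < n" "j' \<noteq> j" "s j' \<noteq> None" "(f(i:=y)) j' = f j" by blast
      then show "f j = y \<or> (\<exists>j'\<in>{k\<in>A. f k = f j}. j' \<noteq> j)"
        using assms by (cases "j' = i") auto
    next
      assume "f j = y \<or> (\<exists>j'\<in>{k\<in>A. f k = f j}. j' \<noteq> j)"
      then show "\<exists>j'<n. j' \<noteq> j \<and> s j' \<noteq> None \<and> (f(i:=y)) j' = f j"
      proof
        assume "f j = y" then show ?thesis using assms ji by (intro exI[of _ i]) auto
      next
        assume "\<exists>j'\<in>{k\<in>A. f k = f j}. j' \<noteq> j"
        then obtain j' where "j' \<in> A" "f j' = f j" "j' \<noteq> j" by blast
        then show ?thesis using assms j by (intro exI[of _ j']) auto
      qed
    qed
    also have "(\<exists>j'\<in>{k\<in>A. f k = f j}. j' \<noteq> j) \<longleftrightarrow> 2 \<le> cnt1 A f (f j)"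
      unfolding cnt1_def using fin j by (intro two_le_card_iff) auto
    finally show ?thesis .
  qed
  have none: "outcome n s (f(i:=y)) j = None" if "j \<in> A" "f j = 0" for j
  proof -
    have "s j = None" using that assms by auto
    then show ?thesis by (simp add: outcome_def)
  qed
  show ?thesis
  proof (intro set_eqI iffI)
    fix j assume "j \<in> {j. j < n \<and> j \<noteq> i \<and> outcome n s (f(i:=y)) j \<noteq> None}"
    then have j: "j \<in> A" "outcome n s (f(i:=y)) j \<noteq> None" using assms by auto
    then have "f j \<noteq> 0" using none by metis
    then show "j \<in> {j\<in>A. f j \<noteq> 0 \<and> (f j = y \<or> 2 \<le> cnt1 A f (f j))}" using key j by auto
  next
    fix j assume "j \<in> {j\<in>A. f j \<noteq> 0 \<and> (f j = y \<or> 2 \<le> cnt1 A f (f j))}"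
    then show "j \<in> {j. j < n \<and> j \<noteq> i \<and> outcome n s (f(i:=y)) j \<noteq> None}"
      using key assms by auto
  qed
qed


lemma card_B:
  assumes "finite A" "\<forall>j\<in>A. f j \<noteq> 0 \<longrightarrow> f j \<in> {1,2,3}"
  shows "card {j\<in>A. f j \<noteq> 0 \<and> (f j = y \<or> 2 \<le> cnt1 A f (f j))} = remv y (cntv A f)"
proof -
  define B where "B c = {j\<in>A. f j = c \<and> (c = y \<or> 2 \<le> cnt1 A f c)}" for c
  have cB: "card (B c) = (if c = y \<or> 2 \<le> cnt1 A f c then cnt1 A f c else 0)" for c
  proof -
    have "B c = (if c = y \<or> 2 \<le> cnt1 A f c then {j\<in>A. f j = c} else {})"
      by (auto simp: B_def)
    then show ?thesis by (simp add: cnt1_def)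
  qed
  have eq: "{j\<in>A. f j \<noteq> 0 \<and> (f j = y \<or> 2 \<le> cnt1 A f (f j))} = B 1 \<union> B 2 \<union> B 3"
    using assms(2) by (auto simp: B_def)
  have fB: "finite (B c)" for c using assms(1) by (simp add: B_def)
  have d1: "B 1 \<inter> B 2 = {}" "(B 1 \<union> B 2) \<inter> B 3 = {}" by (auto simp: B_def)
  have "card (B 1 \<union> B 2 \<union> B 3) = card (B 1 \<union> B 2) + card (B 3)"
    by (rule card_Un_disjoint) (use fB d1 in auto)
  also have "card (B 1 \<union> B 2) = card (B 1) + card (B 2)"
    by (rule card_Un_disjoint) (use fB d1 in auto)
  finally have "card (B 1 \<union> B 2 \<union> B 3) = card (B 1) + card (B 2) + card (B 3)" .
  also have "\<dots> = remv y (cntv A f)"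
    unfolding cB cntv_def by auto
  finally show ?thesis using eq by simp
qed

lemma Phi_outcome:
  assumes "i < n" "s i = Some h" "y \<le> 3" "A = {..<n} - {i}"
    "\<forall>j\<in>A. s j = None \<longrightarrow> f j = 0" "\<forall>j\<in>A. s j \<noteq> None \<longrightarrow> f j \<in> {1,2,3}"
  shows "Phi n i (outcome n s (f(i:=y))) = Gv y (cntv A f)"
proof (cases "y \<noteq> 0 \<and> sel y (cntv A f) = 0")
  case True
  have "outcome n s (f(i:=y)) i = None" using True outcome_i[OF assms] by blast
  then have "Phi n i (outcome n s (f(i:=y))) = 0" by (simp add: Phi_def)
  moreover have "Gv y (cntv A f) = 0" using True by (simp add: Gv_def)
  ultimately show ?thesis by simp
next
  case False
  have fin: "finite A" using assms by simp
  have sup: "\<forall>j\<in>A. f j \<noteq> 0 \<longrightarrow> f j \<in> {1,2,3}"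
  proof (intro ballI impI)
    fix j assume j: "j \<in> A" "f j \<noteq> 0"
    then have "s j \<noteq> None" using assms(5) by auto
    then show "f j \<in> {1,2,3}" using assms(6) j by auto
  qed
  have ni: "outcome n s (f(i:=y)) i \<noteq> None" using False outcome_i[OF assms] by blast
  have "Phi n i (outcome n s (f(i:=y))) = Vv (card {j. j < n \<and> j \<noteq> i \<and> outcome n s (f(i:=y)) j \<noteq> None})"
    unfolding Phi_def using ni by (simp only: if_False)
  also have "\<dots> = Vv (remv y (cntv A f))"
    unfolding outcome_others[OF assms] card_B[OF fin sup] ..
  also have "\<dots> = Gv y (cntv A f)" using False unfolding Gv_def by (simp only: if_False)
  finally show ?thesis .
qed

lemma Vv_nonneg: "Vv m \<ge> 0" by (simp add: Vv_def)
lemma Gv_nonneg: "Gv y v \<ge> 0" by (simp add: Gv_def Vv_nonneg)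

lemma step_Phi_Some:
  assumes "i < n" "s i = Some h" "set_pmf (g h) \<subseteq> {0..3}"
  shows "(\<integral>\<^sup>+s'. ennreal (Phi n i s') \<partial>step n ((\<lambda>_. f3)(i:=g)) s) =
    (\<integral>\<^sup>+y. ennreal (Ek (card {j\<in>{..<n}-{i}. s j \<noteq> None}) (Gv y)) \<partial>g h)"
proof -
  define A where "A = {..<n} - {i}"
  define Q where "Q j = (case s j of None \<Rightarrow> return_pmf 0 | Some h \<Rightarrow> ((\<lambda>_. f3)(i:=g)) j h)" for j
  have fin: "finite A" by (simp add: A_def)
  have ins: "{..<n} = insert i A" "i \<notin> A" using assms by (auto simp: A_def)
  have Qi: "Q i = g h" using assms by (simp add: Q_def)
  have QA: "\<forall>j\<in>A. Q j = (if s j \<noteq> None then pmf_of_set {1,2,3} else return_pmf 0)"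
    by (auto simp: Q_def A_def f3_def split: option.splits)
  have "(\<integral>\<^sup>+s'. ennreal (Phi n i s') \<partial>step n ((\<lambda>_. f3)(i:=g)) s) =
      (\<integral>\<^sup>+a. ennreal (Phi n i (outcome n s a)) \<partial>Pi_pmf (insert i A) 0 Q)"
    unfolding step_def actions_def Q_def[symmetric] ins(1) by simp
  also have "\<dots> = (\<integral>\<^sup>+y. \<integral>\<^sup>+f. ennreal (Phi n i (outcome n s (f(i:=y)))) \<partial>Pi_pmf A 0 Q \<partial>Q i)"
    by (subst Pi_pmf_insert[OF fin ins(2)]) (simp add: nn_integral_pair_pmf' case_prod_beta)
  also have "\<dots> = (\<integral>\<^sup>+y. \<integral>\<^sup>+f. ennreal (Gv y (cntv A f)) \<partial>Pi_pmf A 0 Q \<partial>Q i)"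
  proof (intro nn_integral_cong_AE AE_pmfI)
    fix y f assume y: "y \<in> set_pmf (Q i)" and f: "f \<in> set_pmf (Pi_pmf A 0 Q)"
    have y3: "y \<le> 3" using y Qi assms(3) by auto
    have fs: "f \<in> PiE_dflt A 0 (set_pmf \<circ> Q)" by (rule subsetD[OF set_Pi_pmf_subset'[OF fin] f])
    have s1: "\<forall>j\<in>A. s j = None \<longrightarrow> f j = 0"
      using fs QA by (auto simp: PiE_dflt_def)
    have s2: "\<forall>j\<in>A. s j \<noteq> None \<longrightarrow> f j \<in> {1,2,3}"
      using fs QA by (auto simp: PiE_dflt_def)
    show "ennreal (Phi n i (outcome n s (f(i:=y)))) = ennreal (Gv y (cntv A f))"
      using Phi_outcome[OF assms(1,2) y3 A_def s1 s2] by simp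
  qed
  also have "\<dots> = (\<integral>\<^sup>+y. ennreal (Ek (card {j\<in>A. s j \<noteq> None}) (Gv y)) \<partial>Q i)"
    by (intro nn_integral_cong Pi_Ek[OF fin QA] Gv_nonneg)
  finally show ?thesis by (simp add: Qi A_def)
qed

lemma step_Phi_None:
  assumes "s i = None"
  shows "(\<integral>\<^sup>+s'. ennreal (Phi n i s') \<partial>step n \<sigma> s) = 0"
proof -
  have "\<And>a. Phi n i (outcome n s a) = 0" using assms by (simp add: Phi_def outcome_def)
  then show ?thesis by (simp add: step_def)
qed


lemma Vv_ge1: "m \<le> 4 \<Longrightarrow> Vv m \<ge> 1"
  by (auto simp: Vv_def numeral_eq_Suc le_Suc_eq)
lemma Vv_le3: "Vv m \<le> 3"
  by (auto simp: Vv_def)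
lemma Phi_le3: "Phi n i s \<le> 3"
  by (simp add: Phi_def Vv_le3)
lemma Phi_nonneg: "Phi n i s \<ge> 0"
  by (simp add: Phi_def Vv_nonneg)

lemma Phi_Some:
  assumes "s i = Some h"
  shows "Phi n i s = Vv (card {j\<in>{..<n}-{i}. s j \<noteq> None})"
proof -
  have "{j. j < n \<and> j \<noteq> i \<and> s j \<noteq> None} = {j\<in>{..<n}-{i}. s j \<noteq> None}" by auto
  then show ?thesis using assms by (simp add: Phi_def)
qed

lemma card_le4:
  fixes n :: nat
  assumes "i < n" "n \<le> 5"
  shows "card {j\<in>{..<n}-{i}. s j \<noteq> None} \<le> 4"
proof -
  have "card {j\<in>{..<n}-{i}. s j \<noteq> None} \<le> card ({..<n}-{i})" by (intro card_mono finite_Diff finite_lessThan) auto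
  also have "\<dots> = n - 1" using assms by simp
  finally show ?thesis using assms by linarith
qed

lemma bellman:
  assumes "i < n" "n \<le> 5" "valid_rule 3 g"
  shows "ennreal (Phi n i s) \<le> (\<integral>\<^sup>+s'. ennreal (Phi n i s') \<partial>step n ((\<lambda>_. f3)(i:=g)) s)
           + (if s i = None then 0 else 1)"
proof (cases "s i")
  case None
  then show ?thesis by (simp add: Phi_def)
next
  case (Some h)
  define m where "m = card {j\<in>{..<n}-{i}. s j \<noteq> None}"
  have m4: "m \<le> 4" unfolding m_def using card_le4[OF assms(1,2)] .
  have sup: "set_pmf (g h) \<subseteq> {0..3}" using assms(3) by (simp add: valid_rule_def)
  have "ennreal (Vv m - 1) = (\<integral>\<^sup>+y. ennreal (Vv m - 1) \<partial>g h)"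
    by (simp add: measure_pmf.emeasure_space_1)
  also have "\<dots> \<le> (\<integral>\<^sup>+y. ennreal (Ek m (Gv y)) \<partial>g h)"
  proof (intro nn_integral_mono_AE AE_pmfI ennreal_leI)
    fix y assume "y \<in> set_pmf (g h)"
    then have "y = 0 \<or> y \<in> {1,2,3}" using sup by auto
    then show "Vv m - 1 \<le> Ek m (Gv y)" using Ek_idle[OF m4] Ek_vals[OF m4] by auto
  qed
  finally have le: "ennreal (Vv m - 1) \<le> (\<integral>\<^sup>+y. ennreal (Ek m (Gv y)) \<partial>g h)" .
  have pv: "Phi n i s = Vv m" using Phi_Some[of s i h n, OF Some] by (simp only: m_def)
  have "ennreal (Vv m - 1 + 1) = ennreal (Vv m - 1) + ennreal 1"
    by (rule ennreal_plus) (use Vv_ge1[OF m4] in auto)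
  then have "ennreal (Phi n i s) = ennreal (Vv m - 1) + 1" using pv by simp
  also have "\<dots> \<le> (\<integral>\<^sup>+y. ennreal (Ek m (Gv y)) \<partial>g h) + 1"
    using le by (rule add_right_mono)
  finally show ?thesis using step_Phi_Some[where i=i and n=n and s=s and h=h and g=g, OF assms(1) Some sup] Some by (simp add: m_def)
qed

lemma step_Phi_Some_f3:
  assumes "i < n" "s i = Some h"
  shows "(\<integral>\<^sup>+s'. ennreal (Phi n i s') \<partial>step n ((\<lambda>_. f3)(i:=f3)) s) =
    (\<integral>\<^sup>+y. ennreal (Ek (card {j\<in>{..<n}-{i}. s j \<noteq> None}) (Gv y)) \<partial>f3 h)"
  using assms by (intro step_Phi_Some[of i n s h f3]) (auto simp: f3_def)

lemma bellman_eq: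
  assumes "i < n" "n \<le> 5"
  shows "ennreal (Phi n i s) = (\<integral>\<^sup>+s'. ennreal (Phi n i s') \<partial>step n ((\<lambda>_. f3)(i:=f3)) s)
           + (if s i = None then 0 else 1)"
proof (cases "s i")
  case None
  have "Phi n i s = 0" using None by (simp add: Phi_def)
  then show ?thesis using step_Phi_None[where s=s and i=i and n=n, OF None] None by simp
next
  case (Some h)
  define m where "m = card {j\<in>{..<n}-{i}. s j \<noteq> None}"
  have m4: "m \<le> 4" unfolding m_def using card_le4[OF assms(1,2)] .
  have sup: "set_pmf (f3 h) \<subseteq> {0..3}" by (auto simp: f3_def)
  have "(\<integral>\<^sup>+y. ennreal (Ek m (Gv y)) \<partial>f3 h) = (\<integral>\<^sup>+y. ennreal (Vv m - 1) \<partial>f3 h)"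
  proof (intro nn_integral_cong_AE AE_pmfI)
    fix y assume "y \<in> set_pmf (f3 h)"
    then have "y \<in> {1,2,3}" by (simp add: f3_def)
    then show "ennreal (Ek m (Gv y)) = ennreal (Vv m - 1)" using Ek_vals[OF m4] by simp
  qed
  also have "\<dots> = ennreal (Vv m - 1)"
    by (simp add: measure_pmf.emeasure_space_1)
  finally have eq: "(\<integral>\<^sup>+y. ennreal (Ek m (Gv y)) \<partial>f3 h) = ennreal (Vv m - 1)" .
  have pv: "Phi n i s = Vv m" using Phi_Some[of s i h n, OF Some] by (simp only: m_def)
  have "ennreal (Vv m - 1 + 1) = ennreal (Vv m - 1) + ennreal 1"
    by (rule ennreal_plus) (use Vv_ge1[OF m4] in auto)
  then have ph: "ennreal (Phi n i s) = ennreal (Vv m - 1) + 1" using pv by simp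
  have st: "(\<integral>\<^sup>+s'. ennreal (Phi n i s') \<partial>step n ((\<lambda>_. f3)(i:=f3)) s) = (\<integral>\<^sup>+y. ennreal (Ek m (Gv y)) \<partial>f3 h)"
    unfolding m_def using assms(1) Some by (rule step_Phi_Some_f3[of i n s h])
  have si: "(if s i = None then 0 else 1) = (1::ennreal)" using Some by simp
  show ?thesis unfolding st eq si ph ..
qed



lemma run_Suc: "run n \<sigma> (Suc k) p = bind_pmf (run n \<sigma> k p) (step n \<sigma>)"
  by (simp add: run_def)

lemma run_0: "run n \<sigma> 0 p = p"
  by (simp add: run_def)

lemma ind_integral:
  "(\<integral>\<^sup>+s. (if s i = None then 0 else 1) \<partial>measure_pmf q) = ennreal (measure_pmf.prob q {s. s i \<noteq> None})"
proof -
  have "(\<integral>\<^sup>+s. (if s i = None then 0 else 1) \<partial>measure_pmf q) = (\<integral>\<^sup>+s. indicator {s. s i \<noteq> None} s \<partial>measure_pmf q)"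
    by (intro nn_integral_cong) (auto simp: indicator_def)
  also have "\<dots> = emeasure (measure_pmf q) {s. s i \<noteq> None}"
    by (rule nn_integral_indicator) simp
  also have "\<dots> = ennreal (measure_pmf.prob q {s. s i \<noteq> None})"
    by (rule measure_pmf.emeasure_eq_measure)
  finally show ?thesis .
qed

definition ee :: "nat \<Rightarrow> (nat \<Rightarrow> rule) \<Rightarrow> nat \<Rightarrow> state pmf \<Rightarrow> nat \<Rightarrow> ennreal" where
  "ee n \<sigma> i p k = (\<integral>\<^sup>+s. ennreal (Phi n i s) \<partial>run n \<sigma> k p)"
definition PP :: "nat \<Rightarrow> (nat \<Rightarrow> rule) \<Rightarrow> nat \<Rightarrow> state pmf \<Rightarrow> nat \<Rightarrow> real" where
  "PP n \<sigma> i p k = measure_pmf.prob (run n \<sigma> k p) {s. s i \<noteq> None}"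

lemma ee_Suc_plus:
  "ee n \<sigma> i p (Suc k) + ennreal (PP n \<sigma> i p k) =
   (\<integral>\<^sup>+s. (\<integral>\<^sup>+s'. ennreal (Phi n i s') \<partial>step n \<sigma> s) + (if s i = None then 0 else 1) \<partial>run n \<sigma> k p)"
  unfolding ee_def PP_def run_Suc nn_integral_bind_pmf ind_integral[symmetric]
  by (subst nn_integral_add) auto

lemma ee_step_le:
  assumes "i < n" "n \<le> 5" "valid_rule 3 g"
  shows "ee n ((\<lambda>_. f3)(i:=g)) i p k \<le> ee n ((\<lambda>_. f3)(i:=g)) i p (Suc k) + ennreal (PP n ((\<lambda>_. f3)(i:=g)) i p k)"
  unfolding ee_Suc_plus unfolding ee_def by (intro nn_integral_mono bellman[OF assms])

lemma ee_step_eq: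
  assumes "i < n" "n \<le> 5"
  shows "ee n ((\<lambda>_. f3)(i:=f3)) i p k = ee n ((\<lambda>_. f3)(i:=f3)) i p (Suc k) + ennreal (PP n ((\<lambda>_. f3)(i:=f3)) i p k)"
  unfolding ee_Suc_plus unfolding ee_def by (intro nn_integral_cong bellman_eq[OF assms])

lemma ee_tele_le:
  assumes "i < n" "n \<le> 5" "valid_rule 3 g"
  shows "ee n ((\<lambda>_. f3)(i:=g)) i p 0 \<le> ee n ((\<lambda>_. f3)(i:=g)) i p k + (\<Sum>j<k. ennreal (PP n ((\<lambda>_. f3)(i:=g)) i p j))"
proof (induction k)
  case 0
  then show ?case by simp
next
  case (Suc k)
  let ?e = "ee n ((\<lambda>_. f3)(i:=g)) i p"
  let ?P = "\<lambda>j. ennreal (PP n ((\<lambda>_. f3)(i:=g)) i p j)"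
  have "?e 0 \<le> ?e k + (\<Sum>j<k. ?P j)" by (rule Suc.IH)
  also have "\<dots> \<le> (?e (Suc k) + ?P k) + (\<Sum>j<k. ?P j)"
    by (rule add_right_mono) (rule ee_step_le[OF assms])
  also have "\<dots> = ?e (Suc k) + (\<Sum>j<Suc k. ?P j)"
    by (simp add: add_ac)
  finally show ?case .
qed

lemma ee_tele_eq:
  assumes "i < n" "n \<le> 5"
  shows "ee n ((\<lambda>_. f3)(i:=f3)) i p 0 = ee n ((\<lambda>_. f3)(i:=f3)) i p k + (\<Sum>j<k. ennreal (PP n ((\<lambda>_. f3)(i:=f3)) i p j))"
proof (induction k)
  case 0
  then show ?case by simp
next
  case (Suc k)
  let ?e = "ee n ((\<lambda>_. f3)(i:=f3)) i p"
  let ?P = "\<lambda>j. ennreal (PP n ((\<lambda>_. f3)(i:=f3)) i p j)"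
  have "?e 0 = ?e k + (\<Sum>j<k. ?P j)" by (rule Suc.IH)
  also have "\<dots> = (?e (Suc k) + ?P k) + (\<Sum>j<k. ?P j)"
    by (subst ee_step_eq[OF assms]) (rule refl)
  also have "\<dots> = ?e (Suc k) + (\<Sum>j<Suc k. ?P j)"
    by (simp add: add_ac)
  finally show ?case .
qed

lemma Phi_enn_le3: "ennreal (Phi n i s) \<le> 3"
proof -
  have "ennreal (Phi n i s) \<le> ennreal 3" by (rule ennreal_leI[OF Phi_le3])
  then show ?thesis by simp
qed

lemma ee_le_PP: "ee n \<sigma> i p k \<le> 3 * ennreal (PP n \<sigma> i p k)"
proof -
  have "ee n \<sigma> i p k \<le> (\<integral>\<^sup>+s. 3 * (if s i = None then 0 else 1) \<partial>run n \<sigma> k p)"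
    unfolding ee_def
  proof (intro nn_integral_mono)
    fix s show "ennreal (Phi n i s) \<le> 3 * (if s i = None then 0 else 1)"
    proof (cases "s i = None")
      case True then show ?thesis by (simp add: Phi_def)
    next
      case False
      have "ennreal (Phi n i s) \<le> ennreal 3" by (rule ennreal_leI) (rule Phi_le3)
      also have "ennreal 3 = 3 * (if s i = None then 0 else 1)" using False by simp
      finally show ?thesis .
    qed
  qed
  also have "\<dots> = 3 * ennreal (PP n \<sigma> i p k)"
    by (subst nn_integral_cmult) (auto simp: ind_integral PP_def)
  finally show ?thesis .
qed

lemma PP_nonneg: "PP n \<sigma> i p k \<ge> 0" by (simp add: PP_def)

lemma exp_rem_ge:
  fixes p :: "state pmf"
  assumes "i < n" "n \<le> 5" "valid_rule 3 g"
  shows "(\<integral>\<^sup>+s. ennreal (Phi n i s) \<partial>p) \<le> exp_remaining n ((\<lambda>_. f3)(i:=g)) i p"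
proof -
  define \<sigma> where "\<sigma> = (\<lambda>_. f3)(i:=g)"
  define P where "P = PP n \<sigma> i p"
  have er: "exp_remaining n \<sigma> i p = (\<Sum>k. ennreal (P k))"
    by (simp add: exp_remaining_def P_def PP_def)
  have e0: "(\<integral>\<^sup>+s. ennreal (Phi n i s) \<partial>p) = ee n \<sigma> i p 0"
    by (simp add: ee_def run_0)
  show ?thesis
  proof (cases "(\<Sum>k. ennreal (P k)) = \<top>")
    case True
    then show ?thesis using er \<sigma>_def by simp
  next
    case False
    have Pn: "\<And>k. 0 \<le> P k" by (simp add: P_def PP_nonneg)
    have sm: "summable P" using summable_suminf_not_top[OF Pn False] .
    have e0le: "ee n \<sigma> i p 0 \<le> 3"
    proof -
      have "ee n \<sigma> i p 0 \<le> (\<integral>\<^sup>+s. 3 \<partial>p)"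
        unfolding ee_def run_0 by (intro nn_integral_mono Phi_enn_le3)
      then show ?thesis by (simp add: measure_pmf.emeasure_space_1)
    qed
    obtain r where r: "ee n \<sigma> i p 0 = ennreal r" "r \<ge> 0"
      using e0le by (cases "ee n \<sigma> i p 0") (auto simp: top_unique)
    have bnd: "r \<le> (\<Sum>j<k. P j) + 3 * P k" for k
    proof -
      have "ennreal r \<le> ee n \<sigma> i p k + (\<Sum>j<k. ennreal (P j))"
        using ee_tele_le[OF assms, of p k] r by (simp add: \<sigma>_def P_def)
      also have "\<dots> \<le> 3 * ennreal (P k) + (\<Sum>j<k. ennreal (P j))"
        using ee_le_PP[of n \<sigma> i p k] by (simp add: P_def add_right_mono)
      also have "\<dots> = ennreal ((\<Sum>j<k. P j) + 3 * P k)"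
        using Pn by (simp add: sum_nonneg ennreal_plus ennreal_mult add.commute)
      finally have le: "ennreal r \<le> ennreal ((\<Sum>j<k. P j) + 3 * P k)" .
      have nn: "0 \<le> (\<Sum>j<k. P j) + 3 * P k" using Pn by (simp add: sum_nonneg)
      show ?thesis using le ennreal_le_iff[OF nn] by blast
    qed
    have lim: "(\<lambda>k. (\<Sum>j<k. P j) + 3 * P k) \<longlonglongrightarrow> suminf P + 3 * 0"
      by (intro tendsto_add tendsto_mult summable_LIMSEQ sm tendsto_const summable_LIMSEQ_zero)
    have "r \<le> suminf P"
      using LIMSEQ_le_const[OF lim] bnd by auto
    then have "ennreal r \<le> ennreal (suminf P)" by (rule ennreal_leI)
    also have "ennreal (suminf P) = (\<Sum>k. ennreal (P k))"
      using suminf_ennreal2[OF Pn sm] by simp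
    finally show ?thesis using e0 r er \<sigma>_def by simp
  qed
qed

lemma exp_rem_f3:
  fixes p :: "state pmf"
  assumes "i < n" "n \<le> 5"
  shows "exp_remaining n ((\<lambda>_. f3)(i:=f3)) i p = (\<integral>\<^sup>+s. ennreal (Phi n i s) \<partial>p)"
proof (rule antisym)
  define \<sigma> where "\<sigma> = (\<lambda>_. f3)(i:=f3)"
  have er: "exp_remaining n \<sigma> i p = (\<Sum>k. ennreal (PP n \<sigma> i p k))"
    by (simp add: exp_remaining_def PP_def)
  have e0: "(\<integral>\<^sup>+s. ennreal (Phi n i s) \<partial>p) = ee n \<sigma> i p 0"
    by (simp add: ee_def run_0)
  have "(\<Sum>k. ennreal (PP n \<sigma> i p k)) \<le> ee n \<sigma> i p 0"
  proof (rule suminf_le_const[OF summableI])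
    fix k
    show "(\<Sum>j<k. ennreal (PP n \<sigma> i p j)) \<le> ee n \<sigma> i p 0"
      using ee_tele_eq[OF assms, of p k] by (simp add: \<sigma>_def)
  qed
  then show "exp_remaining n ((\<lambda>_. f3)(i:=f3)) i p \<le> (\<integral>\<^sup>+s. ennreal (Phi n i s) \<partial>p)"
    using er e0 \<sigma>_def by simp
next
  have v: "valid_rule 3 f3" by (auto simp: valid_rule_def f3_def)
  show "(\<integral>\<^sup>+s. ennreal (Phi n i s) \<partial>p) \<le> exp_remaining n ((\<lambda>_. f3)(i:=f3)) i p"
    by (rule exp_rem_ge[OF assms v])
qed

lemma Phi_init:
  assumes "i < n"
  shows "Phi n i (init n) = Vv (n - 1)"
proof -
  have A: "{j. j < n \<and> j \<noteq> i \<and> init n j \<noteq> None} = {..<n} - {i}"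
    by (auto simp: init_def)
  have C: "card ({..<n} - {i}) = n - 1" using assms by simp
  have ni: "(init n i = None) = False" using assms by (simp add: init_def)
  show ?thesis unfolding Phi_def ni if_False A C by (rule refl)
qed

theorem theorem4:
  assumes "n \<in> {2, 3, 4, 5::nat}"
  shows "equilibrium_protocol n 3 f3 \<and>
    (\<forall>i<n. expected_latency n f3 i =
       ennreal (if n = 2 then 3/2 else if n = 3 then 15/8
                else if n = 4 then 189/80 else 597/200))"
proof -
  have n5: "n \<le> 5" using assms by auto
  have vf: "valid_rule 3 f3" by (auto simp: valid_rule_def f3_def)
  have triv: "(\<lambda>_. f3)(i := f3) = (\<lambda>_::nat. f3)" for i by (simp add: fun_eq_iff)
  have eq: "equilibrium_protocol n 3 f3"
    unfolding equilibrium_protocol_def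
  proof (intro conjI vf allI impI)
    fix i h g
    assume i: "i < n" and g: "valid_rule 3 g"
    show "cond_latency n f3 f3 i h \<le> cond_latency n f3 g i h"
      unfolding cond_latency_def exp_rem_f3[OF i n5] using exp_rem_ge[OF i n5 g] by (rule add_left_mono)
  qed
  have lat: "expected_latency n f3 i =
       ennreal (if n = 2 then 3/2 else if n = 3 then 15/8
                else if n = 4 then 189/80 else 597/200)" if i: "i < n" for i
  proof -
    have "expected_latency n f3 i = exp_remaining n ((\<lambda>_. f3)(i := f3)) i (return_pmf (init n))"
      unfolding expected_latency_def triv ..
    also have "\<dots> = ennreal (Phi n i (init n))"
      unfolding exp_rem_f3[OF i n5] by simp
    also have "\<dots> = ennreal (Vv (n - 1))" unfolding Phi_init[OF i] ..
    also have "\<dots> = ennreal (if n = 2 then 3/2 else if n = 3 then 15/8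
                else if n = 4 then 189/80 else 597/200)"
      using assms by (auto simp: Vv_def)
    finally show ?thesis .
  qed
  show ?thesis using eq lat by blast
qed

end
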